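(* Let $(\Omega,\mathcal{F},\mathbb{P})$ be a nonatomic probability space, let $u:\mathbb{R}\to\mathbb{R}\cup\{-\infty\}$ be a utility function bounded from above, let $\alpha\in\mathbb{R}$ be such that $u(x)\ge\alpha$ for some $x\in\mathbb{R}$, and fix $1\le p<\infty$. Assume one of the following conditions: (i) $u(x)\le\alpha$ for all $x\in\mathbb{R}$; (ii) $\lim_{x\to\infty}\frac{x^p}{u(-x)}=0$. Then the set $\mathcal{A}_u^p=\{X\in L^p: \mathbb{E}[u(X)]\ge\alpha\}$ has empty interior in $L^p$.
   Context: A utility function is a nonconstant, increasing, concave function $u:\mathbb{R}\to\mathbb{R}\cup\{-\infty\}$. $L^p=L^p(\Omega,\mathcal{F},\mathbb{P})$ with its norm topology. *)

theory Defs
  imports "HOL-Probability.Probability"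
begin

definition utility :: "(real \<Rightarrow> ereal) \<Rightarrow> bool" where
  "utility u \<longleftrightarrow>
     (\<forall>x. u x \<noteq> \<infinity>) \<and>
     (\<exists>x y. u x \<noteq> u y) \<and>
     mono u \<and>
     (\<forall>x y t. 0 \<le> t \<and> t \<le> 1 \<longrightarrow>
        ereal t * u x + ereal (1 - t) * u y \<le> u (t * x + (1 - t) * y))"

definition nonatomic :: "'a measure \<Rightarrow> bool" where
  "nonatomic M \<longleftrightarrow>
     (\<forall>A\<in>sets M. measure M A > 0 \<longrightarrow>
        (\<exists>B\<in>sets M. B \<subseteq> A \<and> 0 < measure M B \<and> measure M B < measure M A))"

text \<open>Expectation of an extended-real valued random variable:
  E[f] = E[f^+] - E[f^-] (well defined in ereal when E[f^+] < \<infinity>).\<close>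
definition ereal_expectation :: "'a measure \<Rightarrow> ('a \<Rightarrow> ereal) \<Rightarrow> ereal" where
  "ereal_expectation M f =
     enn2ereal (\<integral>\<^sup>+ \<omega>. e2ennreal (f \<omega>) \<partial>M) - enn2ereal (\<integral>\<^sup>+ \<omega>. e2ennreal (- f \<omega>) \<partial>M)"

text \<open>L^p (as functions; the L^p pseudometric).\<close>
definition Lp_space :: "'a measure \<Rightarrow> real \<Rightarrow> ('a \<Rightarrow> real) set" where
  "Lp_space M p = {X. X \<in> borel_measurable M \<and> integrable M (\<lambda>\<omega>. \<bar>X \<omega>\<bar> powr p)}"

definition Lp_dist :: "'a measure \<Rightarrow> real \<Rightarrow> ('a \<Rightarrow> real) \<Rightarrow> ('a \<Rightarrow> real) \<Rightarrow> real" where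
  "Lp_dist M p X Y = (LINT \<omega>|M. \<bar>X \<omega> - Y \<omega>\<bar> powr p) powr (1 / p)"

definition Lp_interior :: "'a measure \<Rightarrow> real \<Rightarrow> ('a \<Rightarrow> real) set \<Rightarrow> ('a \<Rightarrow> real) set" where
  "Lp_interior M p A =
     {X \<in> A \<inter> Lp_space M p. \<exists>\<epsilon>>0. \<forall>Y\<in>Lp_space M p. Lp_dist M p X Y < \<epsilon> \<longrightarrow> Y \<in> A}"

definition acceptance_set :: "'a measure \<Rightarrow> real \<Rightarrow> (real \<Rightarrow> ereal) \<Rightarrow> real \<Rightarrow> ('a \<Rightarrow> real) set" where
  "acceptance_set M p u \<alpha> = {X \<in> Lp_space M p. ereal_expectation M (\<lambda>\<omega>. u (X \<omega>)) \<ge> ereal \<alpha>}"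

end

theory Submission imports Defs begin

lemma enn2ereal_fin: "x \<noteq> top \<Longrightarrow> enn2ereal x = ereal (enn2real x)"
  by (cases x rule: ennreal_cases) auto

lemma expect_real:
  assumes "integrable M g"
  shows "ereal_expectation M (\<lambda>\<omega>. ereal (g \<omega>)) = ereal (integral\<^sup>L M g)"
proof -
  have 1: "(\<integral>\<^sup>+ x. ennreal (g x) \<partial>M) \<noteq> \<infinity>" "(\<integral>\<^sup>+ x. ennreal (- g x) \<partial>M) \<noteq> \<infinity>"
    using assms by auto
  show ?thesis
    unfolding ereal_expectation_def real_lebesgue_integral_def[OF assms]
    using 1 by (simp add: enn2ereal_fin)
qed

lemma expect_mono:
  assumes "\<And>\<omega>. \<omega> \<in> space M \<Longrightarrow> f \<omega> \<le> g \<omega>"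
  shows "ereal_expectation M f \<le> ereal_expectation M g"
  unfolding ereal_expectation_def
proof (rule ereal_minus_mono)
  show "enn2ereal (\<integral>\<^sup>+ \<omega>. e2ennreal (f \<omega>) \<partial>M) \<le> enn2ereal (\<integral>\<^sup>+ \<omega>. e2ennreal (g \<omega>) \<partial>M)"
    using assms by (simp only: less_eq_ennreal.rep_eq[symmetric], intro nn_integral_mono e2ennreal_mono) auto
  show "enn2ereal (\<integral>\<^sup>+ \<omega>. e2ennreal (- g \<omega>) \<partial>M) \<le> enn2ereal (\<integral>\<^sup>+ \<omega>. e2ennreal (- f \<omega>) \<partial>M)"
    using assms by (simp only: less_eq_ennreal.rep_eq[symmetric], intro nn_integral_mono e2ennreal_mono) auto
qed

lemma small_set:
  assumes "prob_space M" "nonatomic M" "A \<in> sets M" "measure M A > 0" "d > 0"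
  shows "\<exists>B\<in>sets M. B \<subseteq> A \<and> 0 < measure M B \<and> measure M B \<le> d"
proof -
  interpret prob_space M by fact
  have "\<exists>B\<in>sets M. B \<subseteq> A \<and> 0 < measure M B \<and> measure M B \<le> measure M A / 2^n" for n
  proof (induction n)
    case 0 then show ?case using assms by auto
  next
    case (Suc n)
    then obtain B where B: "B\<in>sets M" "B \<subseteq> A" "0 < measure M B" "measure M B \<le> measure M A / 2^n" by auto
    then obtain B' where B': "B'\<in>sets M" "B' \<subseteq> B" "0 < measure M B'" "measure M B' < measure M B"
      using assms(2) unfolding nonatomic_def by blast
    have diff: "measure M (B - B') = measure M B - measure M B'"
      using B B' by (simp add: finite_measure_Diff)
    show ?case
    proof (cases "measure M B' \<le> measure M B / 2")
      case True then show ?thesis using B B' by (intro bexI[of _ B']) auto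
    next
      case False then show ?thesis using B B' diff by (intro bexI[of _ "B - B'"]) auto
    qed
  qed
  moreover obtain n where "measure M A / 2^n \<le> d"
  proof -
    obtain n where "1 / d < 2^n" using real_arch_pow[of 2 "1/d"] by auto
    then have "1 < d * 2^n" using assms(5) by (simp add: field_simps)
    moreover have "measure M A \<le> 1" by simp
    ultimately have "measure M A \<le> d * 2^n" by linarith
    then have "measure M A / 2^n \<le> d" by (simp add: field_simps)
    then show ?thesis using that by blast
  qed
  ultimately show ?thesis by (meson order.trans)
qed

lemma bounded_part:
  assumes "prob_space M" "X \<in> borel_measurable M"
  shows "\<exists>K::nat. measure M {\<omega>\<in>space M. \<bar>X \<omega>\<bar> \<le> real K} > 0"
proof (rule ccontr)
  interpret prob_space M by fact
  assume "\<not> ?thesis"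
  then have "measure M {\<omega>\<in>space M. \<bar>X \<omega>\<bar> \<le> real K} = 0" for K
    using measure_nonneg[of M "{\<omega>\<in>space M. \<bar>X \<omega>\<bar> \<le> real K}"] by (meson antisym not_less)
  then have "{\<omega>\<in>space M. \<bar>X \<omega>\<bar> \<le> real K} \<in> null_sets M" for K
    using assms(2) by (intro null_setsI) (auto simp: emeasure_eq_measure)
  then have "(\<Union>K. {\<omega>\<in>space M. \<bar>X \<omega>\<bar> \<le> real K}) \<in> null_sets M" by blast
  moreover have "(\<Union>K. {\<omega>\<in>space M. \<bar>X \<omega>\<bar> \<le> real K}) = space M"
    by (auto intro: real_nat_ceiling_ge)
  ultimately show False using emeasure_space_1 by (simp add: null_sets_def)
qed


lemma core:
  assumes P: "prob_space M" and X: "X \<in> Lp_space M p" and p: "1 \<le> p"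
    and K: "0 \<le> K" and c: "0 \<le> c" and B: "B \<in> sets M" "B \<subseteq> {\<omega>\<in>space M. \<bar>X \<omega>\<bar> \<le> K}"
    and Y: "Y = (\<lambda>\<omega>. if \<omega> \<in> B then - c else X \<omega>)"
  shows "Y \<in> Lp_space M p"
    and "(LINT \<omega>|M. \<bar>X \<omega> - Y \<omega>\<bar> powr p) \<le> (K + c) powr p * measure M B"
    and "(\<forall>\<omega>\<in>space M. u (X \<omega>) \<le> ereal g1) \<Longrightarrow> u (-c) \<le> ereal g2 \<Longrightarrow>
         ereal_expectation M (\<lambda>\<omega>. u (Y \<omega>)) \<le> ereal (g1 * (1 - measure M B) + g2 * measure M B)"
proof -
  interpret prob_space M by fact
  have Xm: "X \<in> borel_measurable M" and Xi: "integrable M (\<lambda>\<omega>. \<bar>X \<omega>\<bar> powr p)"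
    using X by (auto simp: Lp_space_def)
  have Ym: "Y \<in> borel_measurable M"
    unfolding Y using B Xm by (intro measurable_If_set) auto
  have "integrable M (\<lambda>\<omega>. \<bar>Y \<omega>\<bar> powr p)"
  proof (rule Bochner_Integration.integrable_bound)
    show "integrable M (\<lambda>\<omega>. \<bar>X \<omega>\<bar> powr p + c powr p)" using Xi by auto
    show "(\<lambda>\<omega>. \<bar>Y \<omega>\<bar> powr p) \<in> borel_measurable M" using Ym by measurable
    show "AE \<omega> in M. norm (\<bar>Y \<omega>\<bar> powr p) \<le> norm (\<bar>X \<omega>\<bar> powr p + c powr p)"
      using c by (auto simp: Y)
  qed
  then show "Y \<in> Lp_space M p" using Ym by (simp add: Lp_space_def)
  have bi: "integrable M (\<lambda>\<omega>. (K + c) powr p * indicator B \<omega>)"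
    using B by (intro integrable_mult_right integrable_real_indicator) (auto simp: emeasure_eq_measure)
  have bnd: "\<bar>X \<omega> - Y \<omega>\<bar> powr p \<le> (K + c) powr p * indicator B \<omega>" if "\<omega> \<in> space M" for \<omega>
  proof (cases "\<omega> \<in> B")
    case True
    then have "\<bar>X \<omega>\<bar> \<le> K" using B by auto
    then have "\<bar>X \<omega> - Y \<omega>\<bar> \<le> K + c" using True c by (auto simp: Y)
    then show ?thesis using True p by (simp add: powr_mono2)
  next
    case False then show ?thesis by (simp add: Y)
  qed
  have di: "integrable M (\<lambda>\<omega>. \<bar>X \<omega> - Y \<omega>\<bar> powr p)"
  proof (rule Bochner_Integration.integrable_bound[OF bi])
    show "(\<lambda>\<omega>. \<bar>X \<omega> - Y \<omega>\<bar> powr p) \<in> borel_measurable M" using Ym Xm by measurable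
    show "AE \<omega> in M. norm (\<bar>X \<omega> - Y \<omega>\<bar> powr p) \<le> norm ((K + c) powr p * indicator B \<omega>)"
      using bnd by (auto intro!: AE_I2)
  qed
  have "(LINT \<omega>|M. \<bar>X \<omega> - Y \<omega>\<bar> powr p) \<le> (LINT \<omega>|M. (K + c) powr p * indicator B \<omega>)"
    using di bi bnd by (intro integral_mono) auto
  also have "\<dots> = (K + c) powr p * measure M B" using B by simp
  finally show "(LINT \<omega>|M. \<bar>X \<omega> - Y \<omega>\<bar> powr p) \<le> (K + c) powr p * measure M B" .
  assume g1: "\<forall>\<omega>\<in>space M. u (X \<omega>) \<le> ereal g1" and g2: "u (-c) \<le> ereal g2"
  have "ereal_expectation M (\<lambda>\<omega>. u (Y \<omega>)) \<le> ereal_expectation M (\<lambda>\<omega>. ereal (g1 + (g2 - g1) * indicator B \<omega>))"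
    using g1 g2 by (intro expect_mono) (auto simp: Y)
  also have "\<dots> = ereal (LINT \<omega>|M. g1 + (g2 - g1) * indicator B \<omega>)"
    using B by (intro expect_real) (auto intro!: integrable_mult_right integrable_real_indicator simp: emeasure_eq_measure prob_space)
  also have "(LINT \<omega>|M. g1 + (g2 - g1) * indicator B \<omega>) = g1 + (g2 - g1) * measure M B"
    using B by (subst Bochner_Integration.integral_add) (auto intro!: integrable_mult_right integrable_real_indicator simp: emeasure_eq_measure prob_space)
  finally show "ereal_expectation M (\<lambda>\<omega>. u (Y \<omega>)) \<le> ereal (g1 * (1 - measure M B) + g2 * measure M B)"
    by (simp add: algebra_simps)
qed


lemma lim_bound:
  assumes lim: "((\<lambda>x. ereal (x powr p) / u (- x)) \<longlongrightarrow> 0) at_top" and C: "\<forall>x. u x \<le> ereal C"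
    and L: "L > 0" and p: "1 \<le> p"
  shows "eventually (\<lambda>x. u (-x) \<le> ereal (- L * x powr p)) at_top"
proof -
  define C' where "C' = max C 1"
  have C': "C' \<ge> 1" "C \<le> C'" by (auto simp: C'_def)
  have "eventually (\<lambda>x. ereal (x powr p) / u (- x) < ereal (1/L)) at_top"
    using lim L by (intro order_tendstoD) auto
  moreover have "eventually (\<lambda>x. ereal (-(1/L)) < ereal (x powr p) / u (- x)) at_top"
    using lim L by (intro order_tendstoD) auto
  moreover have "eventually (\<lambda>x. x \<ge> max 1 (C' / L)) at_top" by (rule eventually_ge_at_top)
  ultimately show ?thesis
  proof eventually_elim
    case (elim x)
    then have x1: "1 \<le> x" and xC: "C' / L \<le> x" by auto
    have "x powr 1 \<le> x powr p" using x1 p by (intro powr_mono) auto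
    then have xp: "x \<le> x powr p" using x1 by simp
    show ?case
    proof (cases "u (-x)")
      case (real r)
      have rC: "r \<le> C'" using C C' real by (metis ereal_less_eq(3) order.trans)
      consider "r < 0" | "r = 0" | "r > 0" by linarith
      then show ?thesis
      proof cases
        case 1
        then have "-(1/L) < x powr p / r" using elim real by simp
        then have "x powr p < r * (-(1/L))" using 1 by (simp add: field_simps)
        then have "r < - L * x powr p" using L by (simp add: field_simps)
        then show ?thesis using real by simp
      next
        case 2
        then have False using elim real x1 by simp
        then show ?thesis ..
      next
        case 3
        have "1/L \<le> x / C'" using xC L C' by (simp add: field_simps)
        also have "\<dots> \<le> x powr p / r" using xp rC 3 x1 C' by (intro frac_le) auto
        finally have False using elim real 3 by simp
        then show ?thesis ..
      qed
    next
      case PInf then show ?thesis using spec[OF C, of "-x"] by simp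
    next
      case MInf then show ?thesis by simp
    qed
  qed
qed

theorem lemma6p3:
  fixes M :: "'a measure" and u :: "real \<Rightarrow> ereal" and \<alpha> p :: real
  assumes "prob_space M" and "nonatomic M"
    and "utility u" and "\<exists>C::real. \<forall>x. u x \<le> ereal C"
    and "\<exists>x. u x \<ge> ereal \<alpha>"
    and "1 \<le> p"
    and "(\<forall>x. u x \<le> ereal \<alpha>) \<or>
         ((\<lambda>x. ereal (x powr p) / u (- x)) \<longlongrightarrow> 0) at_top"
  shows "Lp_interior M p (acceptance_set M p u \<alpha>) = {}"
proof (rule ccontr)
  interpret prob_space M by fact
  assume "Lp_interior M p (acceptance_set M p u \<alpha>) \<noteq> {}"
  then obtain X \<epsilon> where XL: "X \<in> Lp_space M p" and \<epsilon>: "\<epsilon> > 0"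
    and ball: "\<And>Y. Y \<in> Lp_space M p \<Longrightarrow> Lp_dist M p X Y < \<epsilon> \<Longrightarrow> Y \<in> acceptance_set M p u \<alpha>"
    unfolding Lp_interior_def by blast
  have p: "1 \<le> p" by fact
  have Xm: "X \<in> borel_measurable M" using XL by (simp add: Lp_space_def)
  obtain Kn :: nat where Kpos: "measure M {\<omega>\<in>space M. \<bar>X \<omega>\<bar> \<le> real Kn} > 0"
    using bounded_part[OF assms(1) Xm] by blast
  define K where "K = real Kn"
  define A0 where "A0 = {\<omega>\<in>space M. \<bar>X \<omega>\<bar> \<le> K}"
  have K0: "0 \<le> K" by (simp add: K_def)
  have A0: "A0 \<in> sets M" "measure M A0 > 0" using Kpos Xm by (auto simp: A0_def K_def)
  have key: False if c: "0 \<le> c" and B: "B \<in> sets M" "B \<subseteq> A0"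
    and small: "(K + c) powr p * measure M B < \<epsilon> powr p"
    and g1: "\<forall>\<omega>\<in>space M. u (X \<omega>) \<le> ereal g1" and g2: "u (-c) \<le> ereal g2"
    and lt: "g1 * (1 - measure M B) + g2 * measure M B < \<alpha>" for c B g1 g2
  proof -
    define Y where "Y = (\<lambda>\<omega>. if \<omega> \<in> B then - c else X \<omega>)"
    note cr = core[OF assms(1) XL p K0 c B(1) B(2)[unfolded A0_def] Y_def]
    have "(LINT \<omega>|M. \<bar>X \<omega> - Y \<omega>\<bar> powr p) < \<epsilon> powr p" using cr(2) small by linarith
    moreover have "0 \<le> (LINT \<omega>|M. \<bar>X \<omega> - Y \<omega>\<bar> powr p)" by (intro Bochner_Integration.integral_nonneg) auto
    ultimately have "(LINT \<omega>|M. \<bar>X \<omega> - Y \<omega>\<bar> powr p) powr (1/p) < (\<epsilon> powr p) powr (1/p)"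
      using p by (intro powr_less_mono2) auto
    also have "\<dots> = \<epsilon>" using p \<epsilon> by (simp add: powr_powr)
    finally have "Lp_dist M p X Y < \<epsilon>" by (simp add: Lp_dist_def)
    then have "Y \<in> acceptance_set M p u \<alpha>" using ball cr(1) by blast
    then have "ereal \<alpha> \<le> ereal_expectation M (\<lambda>\<omega>. u (Y \<omega>))" by (simp add: acceptance_set_def)
    also have "\<dots> \<le> ereal (g1 * (1 - measure M B) + g2 * measure M B)" using cr(3) g1 g2 by blast
    finally show False using lt by simp
  qed
  have umono: "mono u" and unc: "\<exists>x y. u x \<noteq> u y" using assms(3) by (auto simp: utility_def)
  from assms(7) show False
  proof
    assume ua: "\<forall>x. u x \<le> ereal \<alpha>"
    obtain y where uy: "u y < ereal \<alpha>"
      using unc ua assms(5) by (metis antisym not_le)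
    define \<beta> where "\<beta> = (if u y = - \<infinity> then \<alpha> - 1 else real_of_ereal (u y))"
    have \<beta>: "u y \<le> ereal \<beta>" "\<beta> < \<alpha>"
      using uy by (cases "u y"; auto simp: \<beta>_def)+
    define c where "c = max 0 (- y)"
    have c: "0 \<le> c" "u (-c) \<le> ereal \<beta>"
    proof -
      have "-c \<le> y" by (simp add: c_def)
      then have "u (-c) \<le> u y" using umono by (simp add: mono_def)
      then show "0 \<le> c" "u (-c) \<le> ereal \<beta>" using \<beta> by (auto simp: c_def)
    qed
    define d where "d = \<epsilon> powr p / ((K + c) powr p + 1) / 2"
    have pos: "0 < (K + c) powr p + 1" using powr_ge_zero[of "K + c" p] by linarith
    then have d: "d > 0" using \<epsilon> unfolding d_def by (intro divide_pos_pos) auto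
    obtain B where B: "B \<in> sets M" "B \<subseteq> A0" "0 < measure M B" "measure M B \<le> d"
      using small_set[OF assms(1,2) A0 d] by blast
    have "(K + c) powr p * measure M B \<le> ((K + c) powr p + 1) * d"
      using B by (intro mult_mono) auto
    also have "\<dots> = \<epsilon> powr p / 2" using pos unfolding d_def by (simp add: field_simps)
    also have "\<dots> < \<epsilon> powr p" using \<epsilon> by simp
    finally have sm: "(K + c) powr p * measure M B < \<epsilon> powr p" .
    have "\<alpha> * (1 - measure M B) + \<beta> * measure M B < \<alpha>"
      using B(3) \<beta>(2) by (simp add: algebra_simps)
    then show False using key[OF c(1) B(1,2) sm _ c(2)] ua by auto
  next
    assume lim: "((\<lambda>x. ereal (x powr p) / u (- x)) \<longlongrightarrow> 0) at_top"
    obtain C where C: "\<forall>x. u x \<le> ereal C" using assms(4) by blast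
    have Ca: "\<alpha> \<le> C" using assms(5) C by (metis ereal_less_eq(3) order.trans)
    define \<eta> where "\<eta> = \<epsilon> powr p / 2 powr (p + 1)"
    have \<eta>: "\<eta> > 0" using \<epsilon> by (simp add: \<eta>_def)
    define L where "L = (\<bar>C\<bar> + \<bar>C - \<alpha>\<bar> + 1) / \<eta>"
    have L: "L > 0" using \<eta> by (simp add: L_def)
    have "eventually (\<lambda>x. u (- x) \<le> ereal (- L * x powr p)) at_top"
      using lim_bound[OF lim C L p] .
    then obtain x0 where x0: "\<And>x. x \<ge> x0 \<Longrightarrow> u (- x) \<le> ereal (- L * x powr p)"
      by (auto simp: eventually_at_top_linorder)
    define m where "m = max (max K x0) 1"
    have m: "K \<le> m" "x0 \<le> m" "1 \<le> m" by (auto simp: m_def)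
    define d where "d = \<eta> / m powr p"
    have d: "d > 0" using \<eta> m by (simp add: d_def)
    obtain B where B: "B \<in> sets M" "B \<subseteq> A0" "0 < measure M B" "measure M B \<le> d"
      using small_set[OF assms(1,2) A0 d] by blast
    define \<delta> where "\<delta> = measure M B"
    have \<delta>: "0 < \<delta>" "\<delta> \<le> d" "\<delta> \<le> 1" using B by (auto simp: \<delta>_def)
    define c where "c = (\<eta> / \<delta>) powr (1 / p)"
    have cp: "c powr p = \<eta> / \<delta>" using p \<eta> \<delta> by (simp add: c_def powr_powr)
    have "m powr p \<le> \<eta> / \<delta>" using \<delta> d m \<eta> by (simp add: d_def field_simps)
    then have "(m powr p) powr (1/p) \<le> c" unfolding c_def using p m by (intro powr_mono2) auto
    then have cm: "m \<le> c" using p m by (simp add: powr_powr)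
    have c0: "0 \<le> c" using cm m by linarith
    have "(K + c) powr p * \<delta> \<le> (2 * c) powr p * \<delta>"
      using m cm K0 \<delta> p by (intro mult_right_mono powr_mono2) auto
    also have "\<dots> = 2 powr p * \<eta>" using cp \<delta> c0 by (simp add: powr_mult)
    also have "\<dots> = \<epsilon> powr p / 2" by (simp add: \<eta>_def powr_add)
    also have "\<dots> < \<epsilon> powr p" using \<epsilon> by simp
    finally have sm: "(K + c) powr p * measure M B < \<epsilon> powr p" by (simp add: \<delta>_def)
    have g2: "u (- c) \<le> ereal (- L * c powr p)" using x0 cm m by auto
    have "C * (1 - \<delta>) + (- L * c powr p) * \<delta> = C - C * \<delta> - L * \<eta>"
      using cp \<delta> by (simp add: algebra_simps)
    also have "L * \<eta> = \<bar>C\<bar> + \<bar>C - \<alpha>\<bar> + 1" using \<eta> by (simp add: L_def)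
    also have "- C * \<delta> \<le> \<bar>C\<bar>"
    proof -
      have "- C * \<delta> \<le> \<bar>C\<bar> * \<delta>" using \<delta> by (intro mult_right_mono) auto
      also have "\<dots> \<le> \<bar>C\<bar>" using \<delta> by (intro mult_left_le) auto
      finally show ?thesis .
    qed
    ultimately have "C * (1 - \<delta>) + (- L * c powr p) * \<delta> < \<alpha>" using Ca by linarith
    then show False using key[OF c0 B(1,2) sm _ g2] C by (auto simp: \<delta>_def)
  qed
qed

end
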